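(* Let $(\mathbb{R}^n,S)$ and $(\mathbb{R}^m,T)$ be topological Alexander quandles, where $S$, $T$ are continuous additive automorphisms such that $I-S$ and $I-T$ are invertible. Let $F:\mathbb{R}^n\to\mathbb{R}^m$ be a continuous quandle homomorphism with $F(0)=0$. Then $S$, $T$ and $F$ are $\mathbb{R}$-linear and $FS=TF$.
   Context: The topological Alexander quandle $(\mathbb{R}^n,S)$ has operation $x*y=Sx+(I-S)y$. A quandle homomorphism $F$ satisfies $F(x*y)=F(x)*F(y)$, here $F(Sx+(I-S)y)=TF(x)+(I-T)F(y)$. *)

theory Defs
  imports "HOL-Analysis.Analysis"
begin

definition alex_op :: "('a::real_vector \<Rightarrow> 'a) \<Rightarrow> 'a \<Rightarrow> 'a \<Rightarrow> 'a" where
  "alex_op S x y = S x + (y - S y)"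

definition top_alexander :: "('a::real_normed_vector \<Rightarrow> 'a) \<Rightarrow> bool" where
  "top_alexander S \<longleftrightarrow> continuous_on UNIV S \<and> (\<forall>x y. S (x + y) = S x + S y)
     \<and> bij S \<and> bij (\<lambda>x. x - S x)"

end

theory Submission
  imports Defs
begin

lemma cont_add_linear:
  fixes f :: "'a::real_normed_vector \<Rightarrow> 'b::real_normed_vector"
  assumes c: "continuous_on UNIV f" and a: "\<And>x y. f (x+y) = f x + f y"
  shows "linear f"
proof -
  have f0: "f 0 = 0" using a[of 0 0] by simp
  have fneg: "f (-x) = - f x" for x
    using a[of x "-x"] f0 by (metis add.right_inverse add_eq_0_iff)
  have nat: "f (of_nat n *\<^sub>R x) = of_nat n *\<^sub>R f x" for n x
    by (induction n) (auto simp: f0 a scaleR_add_left)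
  have int: "f (of_int k *\<^sub>R x) = of_int k *\<^sub>R f x" for k x
  proof (cases k rule: int_cases)
    case (nonneg n)
    then show ?thesis using nat by simp
  next
    case (neg n)
    then show ?thesis using nat[of "Suc n" x] fneg[of "of_nat (Suc n) *\<^sub>R x"]
      by (simp del: of_nat_Suc)
  qed
  have rat: "f (r *\<^sub>R x) = r *\<^sub>R f x" if rq: "r \<in> \<rat>" for r x
  proof -
    obtain p q where q: "q > 0" and r: "r = of_int p / of_int q"
      using Rats_cases'[OF rq] by blast
    have "of_int q *\<^sub>R f (r *\<^sub>R x) = f (of_int q *\<^sub>R (r *\<^sub>R x))" using int[of q "r *\<^sub>R x"] by (simp only:)
    also have "of_int q *\<^sub>R (r *\<^sub>R x) = of_int p *\<^sub>R x" using q r by simp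
    also have "f \<dots> = of_int p *\<^sub>R f x" using int by simp
    finally have "of_int q *\<^sub>R f (r *\<^sub>R x) = of_int p *\<^sub>R f x" .
    hence "(1 / of_int q) *\<^sub>R (of_int q *\<^sub>R f (r *\<^sub>R x)) = (1 / of_int q) *\<^sub>R (of_int p *\<^sub>R f x)"
      by simp
    thus ?thesis using q r by simp
  qed
  have sc: "f (r *\<^sub>R x) = r *\<^sub>R f x" for r x
  proof -
    have cg: "continuous_on UNIV (\<lambda>r. f (r *\<^sub>R x) - r *\<^sub>R f x)"
      by (intro continuous_intros continuous_on_compose2[OF c]) auto
    have cl: "closed {r \<in> UNIV. f (r *\<^sub>R x) - r *\<^sub>R f x = 0}"
      by (rule continuous_closed_preimage_constant[OF cg]) simp
    have "\<rat> \<subseteq> {r \<in> UNIV. f (r *\<^sub>R x) - r *\<^sub>R f x = 0}" using rat by auto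
    hence "closure \<rat> \<subseteq> {r \<in> UNIV. f (r *\<^sub>R x) - r *\<^sub>R f x = 0}"
      using cl closure_minimal by blast
    thus ?thesis using Rats_closure_real by auto
  qed
  show ?thesis by (rule linearI) (auto simp: a sc)
qed

theorem mainTheorem14:
  fixes S :: "real^'n \<Rightarrow> real^'n" and T :: "real^'m \<Rightarrow> real^'m"
    and F :: "real^'n \<Rightarrow> real^'m"
  assumes "top_alexander S" and "top_alexander T"
    and "continuous_on UNIV F"
    and "\<And>x y. F (alex_op S x y) = alex_op T (F x) (F y)"
    and "F 0 = 0"
  shows "linear S \<and> linear T \<and> linear F \<and> F \<circ> S = T \<circ> F"
proof -
  have S: "continuous_on UNIV S" "\<And>x y. S (x + y) = S x + S y" "bij S" "bij (\<lambda>x. x - S x)"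
    using assms(1) unfolding top_alexander_def by auto
  have T: "continuous_on UNIV T" "\<And>x y. T (x + y) = T x + T y"
    using assms(2) unfolding top_alexander_def by auto
  have S0: "S 0 = 0" using S(2)[of 0 0] by simp
  have T0: "T 0 = 0" using T(2)[of 0 0] by simp
  have FS: "F (S x) = T (F x)" for x
    using assms(4)[of x 0] assms(5) S0 T0 by (simp add: alex_op_def)
  have FI: "F (y - S y) = F y - T (F y)" for y
    using assms(4)[of 0 y] assms(5) S0 T0 by (simp add: alex_op_def)
  have Fadd: "F (a + b) = F a + F b" for a b
  proof -
    obtain x where x: "a = S x" using S(3) by (metis bij_pointE)
    obtain y where y: "b = y - S y" using S(4) by (metis bij_pointE)
    have "F (a + b) = T (F x) + (F y - T (F y))"
      using assms(4)[of x y] x y by (simp add: alex_op_def)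
    thus ?thesis using x y FS FI by simp
  qed
  have "linear S" by (rule cont_add_linear[where f=S, OF S(1) S(2)])
  moreover have "linear T" by (rule cont_add_linear[where f=T, OF T(1) T(2)])
  moreover have "linear F" by (rule cont_add_linear[where f=F, OF assms(3) Fadd])
  moreover have "F \<circ> S = T \<circ> F" using FS by auto
  ultimately show ?thesis by blast
qed

end
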